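(* Let $0\le r\le n$, let $A\in\mathcal{A}_{n+1,r+1}$, and let $\mathcal{T}$ be an arbitrary tiling of $\Gamma(X(A))$. Then the fusion-exchange algorithm produces a tableau $T(A)$, a filling of the tiles of $\mathcal{T}$ with $\alpha$'s, $\beta$'s and $q$'s (some tiles possibly empty), such that: (i) every tile in the same north-strip as, and above, a tile containing $\alpha$ is empty; (ii) every tile in the same west-strip as, and to the left of, a tile containing $\beta$ is empty; (iii) every tile that is not forced to be empty by (i) or (ii) contains an $\alpha$, a $\beta$ or a $q$.
   Context: Words and diagrams. For $0\le r\le n$ let $B_n^r$ be the set of words $X\in\{H,L,0\}^n$ with exactly $r$ letters $L$. If $X$ has $k$ letters $H$, $r$ letters $L$ and $\ell$ letters $0$, its rhombic diagram $\Gamma(X)$ is the closed region bounded by two paths of unit steps, using the directions west (horizontal), south (vertical) and southwest (diagonal: a fixed unit vector strictly between west and south), both going from a point $P$ to a point $Q$: the northwest boundary consists of $\ell$ west steps, then $r$ southwest steps, then $k$ south steps; the southeast boundary is obtained by reading $X$ left to right and taking a west step for each $0$, a southwest step for each $L$, a south step for each $H$. A tiling of $\Gamma(X)$ is a tiling by unit rhombi of three kinds: squares (horizontal and vertical edges), tall rhombi (vertical and diagonal edges), short rhombi (horizontal and diagonal edges). A west-strip (resp. north-strip, northwest-strip) is a maximal set of tiles connected through shared vertical (resp. horizontal, diagonal) edges; each runs from an edge of the southeast boundary to an edge of the northwest boundary. Each tile has two edges on its lower-right side: its east edge (vertical for squares and tall rhombi, diagonal for short rhombi) and its south edge (horizontal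 for squares and short rhombi, diagonal for tall rhombi); the parallel edges on its upper-left side are its west and north edges. Assemblées. An assemblée of size $(m,s)$ is a collection of $s$ nonempty, pairwise disjoint, linearly ordered sets (blocks) with union $\{1,\dots,m\}$; the last element of a block is its block-end. Blocks are listed in the canonical order with decreasing block-ends, and the assemblée is identified with the concatenated word. $\mathcal{A}_{m,s}$ is the set of these. For $A\in\mathcal{A}_{n+1,r+1}$ with block-ends $b_1>\dots>b_{r+1}$, a non-block-end element $x$ is an increase if $x+1$ appears to the right of $x$ in $A$, and a decrease otherwise (so $n+1$, if not a block-end, is a decrease). $X(A)\in B_n^r$ is obtained from $A$ by deleting its last letter $b_{r+1}$ and replacing each increase by $H$, each decrease by $0$ and each remaining block-end by $L$. Fusion-exchange algorithm. A label is a finite, possibly empty, set of consecutive integers; for labels $E,S$ write $E\succ S$ if both are nonempty and $\min E=\max S+1$. Given $A\in\mathcal{A}_{n+1,r+1}$ and a tiling of $\Gamma(X(A))$: initially the southeast boundary edges, in order from $P$ to $Q$, receive the singleton labels of the letters of $A$ from left to right, $b_{r+1}$ omitted. Step: choose a tile whose east and south edges are labeled, say by $E$ and $S$, and whose west and north edges are not. (R I) If $E\succ S$ and the south edge is horizontal: west edge gets $E\cup S$, north edge gets $\emptyset$, place $\alpha$ in the tile. (R II) If $S\succ E$ and the east edge is vertical: north edge gets $E\cup S$, west edge gets $\emptyset$, place $\beta$. (R III) Otherwise: west edge gets $E$, north edge gets $S$, and place $q$ if $E\ne\emptyset$ and $S\ne\emptyset$ (else leave the tile empty). Repeat until every edge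 is labeled; $T(A)$ is the resulting filling. *)

theory Defs
  imports Main
begin

text \<open>The letter 0 is written Z. Z, L, H are also the edge directions west (horizontal),
southwest (diagonal), south (vertical).\<close>
datatype letter = H | L | Z

fun rank :: "letter \<Rightarrow> nat" where
  "rank Z = 0" | "rank L = 1" | "rank H = 2"

text \<open>An assemblee of size (m,s), given as the list of its blocks in canonical order
(decreasing block-ends); each block is a nonempty list (linearly ordered set), and the
assemblee is identified with the concatenated word.\<close>
definition assemblee :: "nat \<Rightarrow> nat \<Rightarrow> nat list list \<Rightarrow> bool" where
  "assemblee m s bs \<longleftrightarrow> length bs = s \<and> (\<forall>b\<in>set bs. b \<noteq> []) \<and>
     distinct (concat bs) \<and> set (concat bs) = {1..m} \<and>
     sorted_wrt (\<lambda>b c. last c < last b) bs"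

definition block_ends :: "nat list list \<Rightarrow> nat set" where
  "block_ends bs = set (map last bs)"

text \<open>The word X(A) of length n: the last letter of A is deleted; block-ends become L,
increases (x+1 to the right of x) become H, decreases become Z.\<close>
definition XA :: "nat \<Rightarrow> nat list list \<Rightarrow> letter list" where
  "XA n bs = (let w = concat bs in
     map (\<lambda>i. if w ! i \<in> block_ends bs then L
               else if Suc (w ! i) \<in> set (drop (Suc i) w) then H else Z) [0..<n])"

text \<open>A tiling of the diagram of X is encoded by a sequence of tile additions starting from
the southeast boundary: the current boundary path from P to Q is a list of strips (strip c is
the strip starting at the c-th edge of the southeast boundary, of direction X!c). Adding the tile
whose east and south edges are the edges at positions p and p+1 of the current path swaps these
two edges (the east edge precedes the south edge on the path, and the pair must be one of
H Z (square), H L (tall rhombus), L Z (short rhombus), i.e. rank decreases). The sequence is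
complete when the path is the northwest boundary 0^l L^r H^k, i.e. sorted by rank.\<close>
fun valid_flips :: "letter list \<Rightarrow> nat list \<Rightarrow> nat list \<Rightarrow> bool" where
  "valid_flips X st [] = sorted (map (\<lambda>c. rank (X ! c)) st)"
| "valid_flips X st (p # ps) =
     (Suc p < length st \<and> rank (X ! (st ! Suc p)) < rank (X ! (st ! p)) \<and>
      valid_flips X (st[p := st ! Suc p, Suc p := st ! p]) ps)"

datatype content = Alpha | Beta | Qc | Empty

definition succl :: "nat set \<Rightarrow> nat set \<Rightarrow> bool" (infix "\<succ>\<^sub>l" 50) where
  "E \<succ>\<^sub>l S \<longleftrightarrow> E \<noteq> {} \<and> S \<noteq> {} \<and> Min E = Max S + 1"

text \<open>Rule applied to a tile with east edge of direction a labelled E and south edge of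
direction b labelled S. Returns (content, label of north edge, label of west edge).\<close>
definition fe_rule :: "letter \<Rightarrow> letter \<Rightarrow> nat set \<Rightarrow> nat set \<Rightarrow> content \<times> nat set \<times> nat set" where
  "fe_rule a b E S =
     (if E \<succ>\<^sub>l S \<and> b = Z then (Alpha, {}, E \<union> S)
      else if S \<succ>\<^sub>l E \<and> a = H then (Beta, E \<union> S, {})
      else (if E \<noteq> {} \<and> S \<noteq> {} then Qc else Empty, S, E))"

text \<open>Run the algorithm along a flip sequence; outputs, in processing order, the tiles as
(strip of east edge, strip of south edge, content).\<close>
fun fe_run :: "letter list \<Rightarrow> nat list \<Rightarrow> nat set list \<Rightarrow> nat list \<Rightarrow> (nat \<times> nat \<times> content) list" where
  "fe_run X st lab [] = []"
| "fe_run X st lab (p # ps) =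
     (let s = st ! p; t = st ! Suc p; E = lab ! p; S = lab ! Suc p;
          (c, nlab, wlab) = fe_rule (X ! s) (X ! t) E S
      in (s, t, c) # fe_run X (st[p := t, Suc p := s]) (lab[p := nlab, Suc p := wlab]) ps)"

definition fe_tiles :: "nat \<Rightarrow> nat list list \<Rightarrow> nat list \<Rightarrow> (nat \<times> nat \<times> content) list" where
  "fe_tiles n bs ps = fe_run (XA n bs) [0..<n] (map (\<lambda>x. {x}) (take n (concat bs))) ps"

definition on_strip :: "(nat \<times> nat \<times> content) list \<Rightarrow> nat \<Rightarrow> nat \<Rightarrow> bool" where
  "on_strip ts c i \<longleftrightarrow> fst (ts ! i) = c \<or> fst (snd (ts ! i)) = c"

definition tcontent :: "(nat \<times> nat \<times> content) list \<Rightarrow> nat \<Rightarrow> content" where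
  "tcontent ts i = snd (snd (ts ! i))"

text \<open>Tile j is forced empty by (i): it lies on the north-strip (strip of direction Z) of an
alpha-tile i, and strictly above it (further along the strip towards the northwest boundary,
i.e. added later). Similarly (ii) with west-strips (direction H), beta, to the left.\<close>
definition forced_empty_alpha :: "letter list \<Rightarrow> (nat \<times> nat \<times> content) list \<Rightarrow> nat \<Rightarrow> bool" where
  "forced_empty_alpha X ts j \<longleftrightarrow> (\<exists>i c. i < j \<and> X ! c = Z \<and> on_strip ts c i \<and> on_strip ts c j
      \<and> tcontent ts i = Alpha)"

definition forced_empty_beta :: "letter list \<Rightarrow> (nat \<times> nat \<times> content) list \<Rightarrow> nat \<Rightarrow> bool" where
  "forced_empty_beta X ts j \<longleftrightarrow> (\<exists>i c. i < j \<and> X ! c = H \<and> on_strip ts c i \<and> on_strip ts c j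
      \<and> tcontent ts i = Beta)"

end

theory Submission
  imports Defs
begin

definition hasA :: "(nat \<times> nat \<times> content) list \<Rightarrow> nat \<Rightarrow> bool" where
  "hasA pre c \<longleftrightarrow> (\<exists>i<length pre. on_strip pre c i \<and> tcontent pre i = Alpha)"

definition hasB :: "(nat \<times> nat \<times> content) list \<Rightarrow> nat \<Rightarrow> bool" where
  "hasB pre c \<longleftrightarrow> (\<exists>i<length pre. on_strip pre c i \<and> tcontent pre i = Beta)"

definition Inv :: "letter list \<Rightarrow> (nat \<times> nat \<times> content) list \<Rightarrow> nat list \<Rightarrow> nat set list \<Rightarrow> bool" where
  "Inv X pre st lab \<longleftrightarrow> (\<forall>k<length st. lab ! k = {} \<longleftrightarrow>
     (X ! (st ! k) = Z \<and> hasA pre (st ! k)) \<or> (X ! (st ! k) = H \<and> hasB pre (st ! k)))"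

lemma ex_less_Suc': "(\<exists>i<Suc m. P i) \<longleftrightarrow> (\<exists>i<m. P i) \<or> P m"
  by (metis less_Suc_eq)

lemma hasA_snoc: "hasA (pre @ [(s,t,c)]) x \<longleftrightarrow> hasA pre x \<or> ((x = s \<or> x = t) \<and> c = Alpha)"
proof -
  have "hasA (pre @ [(s,t,c)]) x \<longleftrightarrow> (\<exists>i<Suc (length pre). on_strip (pre @ [(s,t,c)]) x i \<and> tcontent (pre @ [(s,t,c)]) i = Alpha)"
    unfolding hasA_def by simp
  also have "\<dots> \<longleftrightarrow> hasA pre x \<or> ((x = s \<or> x = t) \<and> c = Alpha)"
    unfolding ex_less_Suc' hasA_def on_strip_def tcontent_def
    by (auto simp: nth_append)
  finally show ?thesis .
qed

lemma hasB_snoc: "hasB (pre @ [(s,t,c)]) x \<longleftrightarrow> hasB pre x \<or> ((x = s \<or> x = t) \<and> c = Beta)"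
proof -
  have "hasB (pre @ [(s,t,c)]) x \<longleftrightarrow> (\<exists>i<Suc (length pre). on_strip (pre @ [(s,t,c)]) x i \<and> tcontent (pre @ [(s,t,c)]) i = Beta)"
    unfolding hasB_def by simp
  also have "\<dots> \<longleftrightarrow> hasB pre x \<or> ((x = s \<or> x = t) \<and> c = Beta)"
    unfolding ex_less_Suc' hasB_def on_strip_def tcontent_def
    by (auto simp: nth_append)
  finally show ?thesis .
qed

lemma fea_at: "forced_empty_alpha X (pre @ (s,t,c) # rest) (length pre) \<longleftrightarrow>
   (\<exists>x. X ! x = Z \<and> (x = s \<or> x = t) \<and> hasA pre x)"
  unfolding forced_empty_alpha_def hasA_def on_strip_def tcontent_def
  by (auto simp: nth_append)

lemma feb_at: "forced_empty_beta X (pre @ (s,t,c) # rest) (length pre) \<longleftrightarrow>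
   (\<exists>x. X ! x = H \<and> (x = s \<or> x = t) \<and> hasB pre x)"
  unfolding forced_empty_beta_def hasB_def on_strip_def tcontent_def
  by (auto simp: nth_append)

lemma tc_at: "tcontent (pre @ (s,t,c) # rest) (length pre) = c"
  unfolding tcontent_def by simp

lemma main:
  "valid_flips X st ps \<Longrightarrow> distinct st \<Longrightarrow> length lab = length st \<Longrightarrow> Inv X pre st lab \<Longrightarrow>
   ts = pre @ fe_run X st lab ps \<Longrightarrow> length pre \<le> j \<Longrightarrow> j < length ts \<Longrightarrow>
   (forced_empty_alpha X ts j \<longrightarrow> tcontent ts j = Empty) \<and>
   (forced_empty_beta X ts j \<longrightarrow> tcontent ts j = Empty) \<and>
   (\<not> forced_empty_alpha X ts j \<and> \<not> forced_empty_beta X ts j \<longrightarrow> tcontent ts j \<noteq> Empty)"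
proof (induction ps arbitrary: st lab pre)
  case Nil
  then show ?case by simp
next
  case (Cons p ps)
  define s where "s = st ! p"
  define t where "t = st ! Suc p"
  define E where "E = lab ! p"
  define S where "S = lab ! Suc p"
  obtain c nl wl where R: "fe_rule (X ! s) (X ! t) E S = (c, nl, wl)" by (cases "fe_rule (X ! s) (X ! t) E S") auto
  define st' where "st' = st[p := t, Suc p := s]"
  define lab' where "lab' = lab[p := nl, Suc p := wl]"
  have v: "Suc p < length st" "rank (X ! t) < rank (X ! s)" "valid_flips X st' ps"
    using Cons.prems(1) by (simp_all add: s_def t_def st'_def)
  have run: "fe_run X st lab (p # ps) = (s, t, c) # fe_run X st' lab' ps"
    using R by (simp add: s_def t_def E_def S_def st'_def lab'_def Let_def)
  have sZ: "X ! s \<noteq> Z" and tH: "X ! t \<noteq> H" using v(2)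
    by (cases "X ! s"; cases "X ! t"; simp)+
  have st: "s \<noteq> t" using Cons.prems(2) v(1) by (simp add: s_def t_def nth_eq_iff_index_eq)
  have InvE: "E = {} \<longleftrightarrow> X ! s = H \<and> hasB pre s" using Cons.prems(4) v(1) sZ
    unfolding Inv_def E_def s_def by auto
  have InvS: "S = {} \<longleftrightarrow> X ! t = Z \<and> hasA pre t" using Cons.prems(4) v(1) tH
    unfolding Inv_def S_def t_def by auto
  have Rc: "(c = Alpha \<longrightarrow> E \<noteq> {} \<and> S \<noteq> {} \<and> X ! t = Z \<and> nl = {} \<and> wl = E \<union> S) \<and>
            (c = Beta \<longrightarrow> E \<noteq> {} \<and> S \<noteq> {} \<and> X ! s = H \<and> wl = {} \<and> nl = E \<union> S) \<and>
            (c \<noteq> Alpha \<and> c \<noteq> Beta \<longrightarrow> nl = S \<and> wl = E \<and> (c = Empty \<longleftrightarrow> E = {} \<or> S = {}))"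
    using R unfolding fe_rule_def succl_def by (auto split: if_splits)
  show ?case
  proof (cases "j = length pre")
    case True
    have ts: "ts = pre @ (s, t, c) # fe_run X st' lab' ps" using Cons.prems(5) run by simp
    show ?thesis unfolding True ts fea_at feb_at tc_at
      using Rc InvE InvS sZ tH by (cases c) auto
  next
    case False
    let ?pre = "pre @ [(s, t, c)]"
    have ts: "ts = ?pre @ fe_run X st' lab' ps" using Cons.prems(5) run by simp
    have d: "distinct st'" using Cons.prems(2) v(1) unfolding st'_def s_def t_def
      by (simp add: distinct_swap)
    have l: "length lab' = length st'" using Cons.prems(3) by (simp add: lab'_def st'_def)
    have I: "Inv X ?pre st' lab'"
      unfolding Inv_def
    proof (intro allI impI)
      fix k assume k: "k < length st'"
      show "lab' ! k = {} \<longleftrightarrow> (X ! (st' ! k) = Z \<and> hasA ?pre (st' ! k)) \<or> (X ! (st' ! k) = H \<and> hasB ?pre (st' ! k))"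
      proof -
        consider "k = p" | "k = Suc p" | "k \<noteq> p \<and> k \<noteq> Suc p" by blast
        then show ?thesis
        proof cases
          case 1
          have "st' ! k = t" "lab' ! k = nl" using 1 v(1) Cons.prems(3)
            by (simp_all add: st'_def lab'_def)
          then show ?thesis unfolding hasA_snoc hasB_snoc using Rc InvS tH by (cases c) auto
        next
          case 2
          have "st' ! k = s" "lab' ! k = wl" using 2 v(1) Cons.prems(3)
            by (simp_all add: st'_def lab'_def)
          then show ?thesis unfolding hasA_snoc hasB_snoc using Rc InvE sZ by (cases c) auto
        next
          case 3
          have k': "k < length st" using k by (simp add: st'_def)
          have e: "st' ! k = st ! k" "lab' ! k = lab ! k" using 3 by (simp_all add: st'_def lab'_def)
          have ne: "st ! k \<noteq> s" "st ! k \<noteq> t" using 3 k' v(1) Cons.prems(2)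
            by (auto simp: s_def t_def nth_eq_iff_index_eq)
          show ?thesis unfolding e hasA_snoc hasB_snoc using ne Cons.prems(4) k'
            unfolding Inv_def by auto
        qed
      qed
    qed
    show ?thesis
      using Cons.IH[OF v(3) d l I ts] Cons.prems(6,7) False by simp
  qed
qed

theorem lemma3p1:
  fixes n r :: nat and bs :: "nat list list" and ps :: "nat list"
  assumes "r \<le> n"
    and "assemblee (n + 1) (r + 1) bs"
    and "valid_flips (XA n bs) [0..<n] ps"
  shows "let X = XA n bs; ts = fe_tiles n bs ps in
           (\<forall>j < length ts. forced_empty_alpha X ts j \<longrightarrow> tcontent ts j = Empty) \<and>
           (\<forall>j < length ts. forced_empty_beta X ts j \<longrightarrow> tcontent ts j = Empty) \<and>
           (\<forall>j < length ts. \<not> forced_empty_alpha X ts j \<and> \<not> forced_empty_beta X ts j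
                \<longrightarrow> tcontent ts j \<noteq> Empty)"
proof -
  have "distinct (concat bs)" "set (concat bs) = {1..n+1}" using assms(2) unfolding assemblee_def by auto
  then have len: "length (concat bs) = n + 1"
    by (metis card_atLeastAtMost diff_Suc_1 distinct_card add.commute plus_1_eq_Suc)
  let ?lab = "map (\<lambda>x. {x}) (take n (concat bs))"
  have l: "length ?lab = length [0..<n]" using len by simp
  have I: "Inv (XA n bs) [] [0..<n] ?lab" unfolding Inv_def hasA_def hasB_def using len by simp
  show ?thesis
    using main[OF assms(3) _ l I, of "fe_tiles n bs ps"]
    unfolding fe_tiles_def Let_def by auto
qed

end
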